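(* Consider an EF neuron as in the context, and suppose it receives no input spike after the end of its input time window, i.e. $\mathcal F_i^{in}\subseteq\{0,\ldots,T^{in}-1\}$ for all $i\in\Gamma$. Let $x=\max(V_m^-(T^{in}-1),0)$ and let $S\subseteq\{0,\ldots,T^{out}-1\}$ be the set of spike times of the LTC spike train of $x$ with the output exponent range $\{e^{out}_{min},\ldots,e^{out}_{max}\}$, where multi-spike LTC is used if the neuron is a multi-spike EF neuron and single-spike LTC is used if it is a single-spike EF neuron. Then the output spikes of the neuron within its output time window are exactly the shifted LTC spikes: $\mathcal F^{out}\cap\{T^{in}-1,\ldots,T^{in}+T^{out}-2\}=\{T^{in}-1+s : s\in S\}$.
   Context: Exponentiate-and-Fire (EF) neuron (discrete time $t\in\mathbb Z$). Fix integers $e^{in}_{min}\le e^{in}_{max}$ (input exponent range), $T^{in}=e^{in}_{max}-e^{in}_{min}+1$ (input time window $\{0,\ldots,T^{in}-1\}$), and integers $e^{out}_{min}\le e^{out}_{max}$ (output exponent range), $T^{out}=e^{out}_{max}-e^{out}_{min}+1$. The output time window is $\{T^{in}-1,\ldots,T^{in}+T^{out}-2\}$. The firing threshold is $V_{th}=2^{e^{out}_{max}}$. The neuron has a finite set $\Gamma$ of synapses with real weights $w_i$, and for each $i\in\Gamma$ a finite set $\mathcal F_i^{in}\subseteq\{0,1,2,\ldots\}$ of input spike times. PSP kernel: $\epsilon(s)=2^{e^{in}_{min}}\cdot 2^{s}\cdot\mathbb 1(s\ge 0)$; total PSP $h_i(t)=\sum_{t^{in}\in\mathcal F_i^{in}}\epsilon(t-t^{in})$.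 With $\mathcal F^{out}\subseteq\mathbb Z$ the set of output spike times and $\eta$ the afterhyperpolarizing kernel, the membrane potential is $V_m(t)=\sum_{i\in\Gamma}w_i h_i(t)+\sum_{t^{out}\in\mathcal F^{out}}\eta(t-t^{out})\,\mathbb 1(t\ge t^{out})$ and the pre-reset membrane potential is $V_m^-(t)=V_m(t)-\eta(0)\,\mathbb 1(t\in\mathcal F^{out})$ (which depends only on output spikes at times $<t$). Output spikes are generated recursively in time: $t\in\mathcal F^{out}$ if and only if $V_m^-(t)\ge V_{th}$ (so no output spikes occur at negative times, where $V_m^-=0$). For a multi-spike EF neuron, the output spike at $t^{out}$ contributes $\eta(s)=-V_{th}\cdot 2^{s}$ (reset by subtraction); for a single-spike EF neuron it contributes $\eta(s)=-V_m^-(t^{out})\cdot 2^{s}$ (reset to zero). Logarithmic approximation and LTC, for integers $e_{min}\le e_{max}$ and real $a$: the multi-power LA is $\tilde a=0$ if $a<2^{e_{min}}$, $\tilde a=\lfloor a/2^{e_{min}}\rfloor 2^{e_{min}}$ if $2^{e_{min}}\le a<2^{e_{max}+1}$, $\tilde a=2^{e_{max}+1}-2^{e_{min}}$ if $a\ge 2^{e_{max}+1}$. The single-power LA is $\tilde a=0$ if $a<2^{e_{min}}$, $\tilde a=2^{\lfloor\log_2 a\rfloor}$ if $2^{e_{min}}\le a<2^{e_{max}+1}$, $\tilde a=2^{e_{max}}$ if $a\ge 2^{e_{max}+1}$. Writing $\tilde a=\sum_{e\in E}2^e$ with distinct $E\subseteq\{e_{min},\ldots,e_{max}\}$, the LTC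 spike train of $a$ is the set of spike times $\{e_{max}-e: e\in E\}\subseteq\{0,\ldots,e_{max}-e_{min}\}$; it is called multi-spike LTC when multi-power LA is used and single-spike LTC when single-power LA is used. *)

theory Defs
  imports Complex_Main
begin

text \<open>Kind of EF neuron: multi-spike (reset by subtraction) or single-spike (reset to zero).\<close>
datatype ef_kind = MultiSpike | SingleSpike

definition psp :: "int \<Rightarrow> int \<Rightarrow> real" where
  "psp ein_min s = (if s \<ge> 0 then (2::real) powi ein_min * (2::real) powi s else 0)"

definition total_psp :: "int \<Rightarrow> nat set \<Rightarrow> int \<Rightarrow> real" where
  "total_psp ein_min Fin t = (\<Sum>tin\<in>Fin. psp ein_min (t - int tin))"

definition syn_input :: "int \<Rightarrow> 'a set \<Rightarrow> ('a \<Rightarrow> real) \<Rightarrow> ('a \<Rightarrow> nat set) \<Rightarrow> int \<Rightarrow> real" where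
  "syn_input ein_min G w Fin t = (\<Sum>i\<in>G. w i * total_psp ein_min (Fin i) t)"

text \<open>Reset amplitude: the AHP kernel of an output spike at t_out is
  eta(s) = - reset_amp * 2^s, with reset_amp = V_th (multi-spike) or V_m^-(t_out) (single-spike).\<close>
definition reset_amp :: "ef_kind \<Rightarrow> real \<Rightarrow> real \<Rightarrow> real" where
  "reset_amp k Vth v = (case k of MultiSpike \<Rightarrow> Vth | SingleSpike \<Rightarrow> v)"

text \<open>Pre-reset membrane potential V_m^-(t) at nonnegative times t (as a natural number),
  defined by recursion over time: an output spike occurs at u iff V_m^-(u) >= V_th,
  and contributes eta(t - u) for t > u.\<close>
function vpre :: "ef_kind \<Rightarrow> real \<Rightarrow> int \<Rightarrow> 'a set \<Rightarrow> ('a \<Rightarrow> real) \<Rightarrow> ('a \<Rightarrow> nat set) \<Rightarrow> nat \<Rightarrow> real" where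
  "vpre k Vth ein_min G w Fin t =
     syn_input ein_min G w Fin (int t)
     + (\<Sum>u\<in>{..<t}. (if Vth \<le> vpre k Vth ein_min G w Fin u
                     then - reset_amp k Vth (vpre k Vth ein_min G w Fin u) * (2::real) ^ (t - u)
                     else 0))"
  by auto
termination
  by (relation "measure (\<lambda>(k, Vth, ein_min, G, w, Fin, t). t)") auto

definition Vm_pre :: "ef_kind \<Rightarrow> int \<Rightarrow> int \<Rightarrow> 'a set \<Rightarrow> ('a \<Rightarrow> real) \<Rightarrow> ('a \<Rightarrow> nat set) \<Rightarrow> int \<Rightarrow> real" where
  "Vm_pre k ein_min eout_max G w Fin t =
     (if t < 0 then 0 else vpre k ((2::real) powi eout_max) ein_min G w Fin (nat t))"

definition out_spikes :: "ef_kind \<Rightarrow> int \<Rightarrow> int \<Rightarrow> 'a set \<Rightarrow> ('a \<Rightarrow> real) \<Rightarrow> ('a \<Rightarrow> nat set) \<Rightarrow> int set" where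
  "out_spikes k ein_min eout_max G w Fin =
     {t. (2::real) powi eout_max \<le> Vm_pre k ein_min eout_max G w Fin t}"

definition la_multi :: "int \<Rightarrow> int \<Rightarrow> real \<Rightarrow> real" where
  "la_multi emin emax a =
     (if a < 2 powi emin then 0
      else if a < 2 powi (emax + 1) then of_int \<lfloor>a / 2 powi emin\<rfloor> * 2 powi emin
      else 2 powi (emax + 1) - 2 powi emin)"

definition la_single :: "int \<Rightarrow> int \<Rightarrow> real \<Rightarrow> real" where
  "la_single emin emax a =
     (if a < 2 powi emin then 0
      else if a < 2 powi (emax + 1) then 2 powi \<lfloor>log 2 a\<rfloor>
      else 2 powi emax)"

definition la :: "ef_kind \<Rightarrow> int \<Rightarrow> int \<Rightarrow> real \<Rightarrow> real" where
  "la k emin emax a = (case k of MultiSpike \<Rightarrow> la_multi emin emax a | SingleSpike \<Rightarrow> la_single emin emax a)"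

definition la_exps :: "ef_kind \<Rightarrow> int \<Rightarrow> int \<Rightarrow> real \<Rightarrow> int set" where
  "la_exps k emin emax a =
     (THE E. E \<subseteq> {emin..emax} \<and> la k emin emax a = (\<Sum>e\<in>E. (2::real) powi e))"

definition ltc :: "ef_kind \<Rightarrow> int \<Rightarrow> int \<Rightarrow> real \<Rightarrow> int set" where
  "ltc k emin emax a = (\<lambda>e. emax - e) ` la_exps k emin emax a"

end

theory Submission
  imports Defs
begin

declare vpre.simps[simp del]

lemma psp_succ: "s \<ge> 0 \<Longrightarrow> psp e (s + 1) = 2 * psp e s"
  unfolding psp_def by (simp add: power_int_add_1)

lemma total_psp_succ:
  assumes "finite A" "\<forall>tin\<in>A. int tin \<le> t"
  shows "total_psp e A (t + 1) = 2 * total_psp e A t"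
  unfolding total_psp_def sum_distrib_left
proof (rule sum.cong[OF refl])
  fix tin assume "tin \<in> A"
  then have "t - int tin \<ge> 0" using assms by auto
  then show "psp e (t + 1 - int tin) = 2 * psp e (t - int tin)"
    using psp_succ[of "t - int tin" e] by (simp add: algebra_simps)
qed

lemma syn_succ:
  assumes "\<forall>i\<in>G. finite (Fin i)" "\<forall>i\<in>G. \<forall>tin\<in>Fin i. int tin \<le> t"
  shows "syn_input e G w Fin (t + 1) = 2 * syn_input e G w Fin t"
  unfolding syn_input_def sum_distrib_left
  by (rule sum.cong[OF refl]) (use assms total_psp_succ in auto)

lemma vpre_succ:
  assumes "\<forall>i\<in>G. finite (Fin i)" "\<forall>i\<in>G. \<forall>tin\<in>Fin i. int tin \<le> int t"
  shows "vpre k c e G w Fin (Suc t) = 2 * vpre k c e G w Fin t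
     - (if c \<le> vpre k c e G w Fin t then 2 * reset_amp k c (vpre k c e G w Fin t) else 0)"
proof -
  let ?V = "vpre k c e G w Fin"
  let ?F = "\<lambda>t u. if c \<le> ?V u then - reset_amp k c (?V u) * (2::real) ^ (t - u) else 0"
  have a: "?V (Suc t) = syn_input e G w Fin (int (Suc t)) + (\<Sum>u<Suc t. ?F (Suc t) u)"
    by (subst vpre.simps) simp
  have b: "?V t = syn_input e G w Fin (int t) + (\<Sum>u<t. ?F t u)"
    by (subst vpre.simps) simp
  have s: "syn_input e G w Fin (int (Suc t)) = 2 * syn_input e G w Fin (int t)"
    unfolding of_nat_Suc add.commute[of "1::int"] by (rule syn_succ[OF assms])
  have f: "(\<Sum>u<t. ?F (Suc t) u) = 2 * (\<Sum>u<t. ?F t u)"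
    unfolding sum_distrib_left
  proof (rule sum.cong[OF refl])
    fix u assume "u \<in> {..<t}"
    then have "Suc t - u = Suc (t - u)" by auto
    then show "?F (Suc t) u = 2 * ?F t u" by simp
  qed
  have "?V (Suc t) = 2 * syn_input e G w Fin (int t) + ((\<Sum>u<t. ?F (Suc t) u) + ?F (Suc t) t)"
    unfolding a s by (simp only: sum.lessThan_Suc)
  also have "\<dots> = 2 * (syn_input e G w Fin (int t) + (\<Sum>u<t. ?F t u)) + ?F (Suc t) t"
    unfolding f by (simp only: algebra_simps)
  also have "\<dots> = 2 * ?V t + ?F (Suc t) t" unfolding b[symmetric] ..
  finally show ?thesis by simp
qed

lemma pw_sub: "(2::real) powi (e - int j) = 2 powi e / 2 ^ j"
  by (simp add: power_int_diff)

lemma pw_1: "(2::real) powi (e + 1) = 2 * 2 powi e"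
  by (simp add: power_int_add_1)

lemma multi_dyn:
  fixes V :: "nat \<Rightarrow> real"
  assumes c: "c > 0" and rec: "\<And>j. V (Suc j) = 2 * V j - (if c \<le> V j then 2 * c else 0)"
  defines "P \<equiv> \<lambda>j. \<Sum>i<j. if c \<le> V i then c / 2 ^ i else 0"
  shows "V j = 2 ^ j * (V 0 - P j)"
proof (induction j)
  case 0 then show ?case by (simp add: P_def)
next
  case (Suc j)
  have "P (Suc j) = P j + (if c \<le> V j then c / 2 ^ j else 0)" by (simp add: P_def)
  then show ?case using rec[of j] Suc by (auto simp: field_simps)
qed

lemma multi_bounds:
  fixes V :: "nat \<Rightarrow> real"
  assumes c: "c > 0" and rec: "\<And>j. V (Suc j) = 2 * V j - (if c \<le> V j then 2 * c else 0)"
    and x: "0 \<le> V 0" "V 0 < 2 * c"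
  defines "P \<equiv> \<lambda>j. \<Sum>i<j. if c \<le> V i then c / 2 ^ i else 0"
  shows "0 \<le> V 0 - P j \<and> V 0 - P j < 2 * c / 2 ^ j"
proof (induction j)
  case 0 then show ?case using x by (simp add: P_def)
next
  case (Suc j)
  have PS: "P (Suc j) = P j + (if c \<le> V j then c / 2 ^ j else 0)" by (simp add: P_def)
  have V: "V j = 2 ^ j * (V 0 - P j)" using multi_dyn[of c V, OF c rec] unfolding P_def by blast
  have iff: "c \<le> V j \<longleftrightarrow> c / 2 ^ j \<le> V 0 - P j"
    unfolding V by (simp add: field_simps)
  show ?case
  proof (cases "c \<le> V j")
    case True
    have h: "V 0 - P (Suc j) = (V 0 - P j) - c / 2 ^ j" using PS True by simp
    have "2 * c / 2 ^ Suc j = 2 * c / 2 ^ j - c / 2 ^ j" by (simp add: field_simps)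
    then show ?thesis unfolding h using Suc iff True by linarith
  next
    case False
    then show ?thesis using Suc iff PS by (simp add: field_simps)
  qed
qed

lemma multi_big:
  fixes V :: "nat \<Rightarrow> real"
  assumes c: "c > 0" and rec: "\<And>j. V (Suc j) = 2 * V j - (if c \<le> V j then 2 * c else 0)"
    and x: "2 * c \<le> V 0"
  defines "P \<equiv> \<lambda>j. \<Sum>i<j. if c \<le> V i then c / 2 ^ i else 0"
  shows "c \<le> V j \<and> P j = 2 * c - 2 * c / 2 ^ j"
proof (induction j)
  case 0 then show ?case using x c by (simp add: P_def)
next
  case (Suc j)
  have PS: "P (Suc j) = P j + (if c \<le> V j then c / 2 ^ j else 0)" by (simp add: P_def)
  have V: "\<And>j. V j = 2 ^ j * (V 0 - P j)" using multi_dyn[of c V, OF c rec] unfolding P_def by blast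
  have P1: "P (Suc j) = 2 * c - 2 * c / 2 ^ Suc j" using Suc PS by (simp add: field_simps)
  have "V (Suc j) = 2 ^ Suc j * (V 0 - 2 * c) + 2 * c" unfolding V[of "Suc j"] P1
    by (simp add: field_simps)
  moreover have "2 ^ Suc j * (V 0 - 2 * c) \<ge> 0" using x by simp
  ultimately show ?case using P1 c by simp
qed

lemma multi_neg:
  fixes V :: "nat \<Rightarrow> real"
  assumes c: "c > 0" and rec: "\<And>j. V (Suc j) = 2 * V j - (if c \<le> V j then 2 * c else 0)"
    and x: "V 0 < 0"
  shows "V j < 0"
proof (induction j)
  case 0 then show ?case using x by simp
next
  case (Suc j) then show ?case using rec[of j] c by simp
qed

lemma multi_main:
  fixes V :: "nat \<Rightarrow> real"
  assumes ce: "c = 2 powi emax" and rec: "\<And>j. V (Suc j) = 2 * V j - (if c \<le> V j then 2 * c else 0)"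
  shows "la_multi (emax - int m) emax (max (V 0) 0) = (\<Sum>j\<in>{j. j \<le> m \<and> c \<le> V j}. c / 2 ^ j)"
proof -
  have c: "c > 0" using ce by simp
  define P where "P \<equiv> \<lambda>j. \<Sum>i<j. if c \<le> V i then c / 2 ^ i else 0"
  have S: "(\<Sum>j\<in>{j. j \<le> m \<and> c \<le> V j}. c / 2 ^ j) = P (Suc m)"
  proof -
    have "{j. j \<le> m \<and> c \<le> V j} = {j \<in> {..<Suc m}. c \<le> V j}" by auto
    moreover have "(\<Sum>j\<in>{j \<in> {..<Suc m}. c \<le> V j}. c / 2 ^ j) = (\<Sum>i<Suc m. if c \<le> V i then c / 2 ^ i else 0)"
      by (rule sum.inter_filter) simp
    ultimately show ?thesis unfolding P_def by simp
  qed
  have e1: "(2::real) powi (emax - int m) = c / 2 ^ m" using ce pw_sub by simp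
  have e2: "(2::real) powi (emax + 1) = 2 * c" using ce pw_1 by simp
  show ?thesis
  proof (cases "V 0 < 0")
    case True
    have nc: "\<not> c \<le> V j" for j
    proof -
      have "V j < 0" by (rule multi_neg[of c V, OF c rec True])
      then show "\<not> c \<le> V j" using c by linarith
    qed
    have Se: "{j. j \<le> m \<and> c \<le> V j} = {}" using nc by auto
    have "max (V 0) 0 = 0" using True by simp
    moreover have "0 < c / 2 ^ m" using c by simp
    ultimately have "la_multi (emax - int m) emax (max (V 0) 0) = 0" unfolding la_multi_def e1 by simp
    then show ?thesis unfolding Se by simp
  next
    case False
    show ?thesis
    proof (cases "V 0 < 2 * c")
      case True
      have b: "0 \<le> V 0 - P (Suc m) \<and> V 0 - P (Suc m) < 2 * c / 2 ^ Suc m"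
        using multi_bounds[of c V, OF c rec _ True, of "Suc m"] False unfolding P_def by simp
      define N where "N = (\<Sum>i<Suc m. if c \<le> V i then (2::nat) ^ (m - i) else 0)"
      have PN: "P (Suc m) = real N * (c / 2 ^ m)"
        unfolding P_def N_def of_nat_sum sum_distrib_right
      proof (rule sum.cong[OF refl])
        fix i assume "i \<in> {..<Suc m}"
        then have "i \<le> m" by simp
        then have "(2::real) ^ m = 2 ^ (m - i) * 2 ^ i" by (simp flip: power_add)
        then show "(if c \<le> V i then c / 2 ^ i else 0) =
          real (if c \<le> V i then 2 ^ (m - i) else 0) * (c / 2 ^ m)" by auto
      qed
      have fl: "\<lfloor>V 0 / (c / 2 ^ m)\<rfloor> = int N"
      proof -
        have q: "V 0 / (c / 2 ^ m) = real N + (V 0 - P (Suc m)) / (c / 2 ^ m)"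
          using c PN by (simp add: field_simps)
        have "0 \<le> (V 0 - P (Suc m)) / (c / 2 ^ m)" using b c by simp
        moreover have "(V 0 - P (Suc m)) / (c / 2 ^ m) < 1" using b c by (simp add: field_simps)
        ultimately show ?thesis unfolding q by (simp add: floor_eq_iff)
      qed
      have mx: "max (V 0) 0 = V 0" using False by simp
      define d where "d = c / 2 ^ m"
      have dpos: "0 < d" using c d_def by simp
      have "la_multi (emax - int m) emax (max (V 0) 0) = P (Suc m)"
      proof (cases "V 0 < d")
        case True2: True
        have q1: "0 \<le> V 0 / d" using False dpos by simp
        have q2: "V 0 / d < 1" using True2 dpos by simp
        have "\<lfloor>V 0 / d\<rfloor> = 0" using q1 q2 by (simp add: floor_eq_iff)
        then have "N = 0" using fl d_def by simp
        then have "P (Suc m) = 0" using PN by simp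
        moreover have "la_multi (emax - int m) emax (max (V 0) 0) = 0"
          unfolding la_multi_def e1 mx d_def[symmetric] using True2 by (simp only: if_True)
        ultimately show ?thesis by simp
      next
        case False2: False
        have "la_multi (emax - int m) emax (max (V 0) 0) = of_int \<lfloor>V 0 / d\<rfloor> * d"
          unfolding la_multi_def e1 e2 mx d_def[symmetric] using False2 True by (simp only: if_True if_False)
        also have "\<dots> = P (Suc m)" using fl PN d_def by simp
        finally show ?thesis .
      qed
      then show ?thesis using S by simp
    next
      case big: False
      then have big': "2 * c \<le> V 0" by simp
      have all: "P j = 2 * c - 2 * c / 2 ^ j" for j
        using multi_big[of c V, OF c rec big'] unfolding P_def by blast
      have PS: "P (Suc m) = 2 * c - c / 2 ^ m" using all[of "Suc m"] by simp
      have nsm: "\<not> V 0 < c / 2 ^ m"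
      proof -
        have "(1::real) \<le> 2 ^ m" by simp
        then have "c / 2 ^ m \<le> c / 1" using c by (intro divide_left_mono) auto
        then show ?thesis using big c by linarith
      qed
      have mx: "max (V 0) 0 = V 0" using big' c by simp
      have "la_multi (emax - int m) emax (max (V 0) 0) = 2 * c - c / 2 ^ m"
        unfolding la_multi_def e1 e2 mx using big nsm by simp
      then show ?thesis using S PS by simp
    qed
  qed
qed

lemma single_pre:
  fixes V :: "nat \<Rightarrow> real"
  assumes rec: "\<And>j. V (Suc j) = 2 * V j - (if c \<le> V j then 2 * V j else 0)"
  shows "(\<forall>i<j. 2 ^ i * V 0 < c) \<Longrightarrow> V j = 2 ^ j * V 0"
proof (induction j)
  case 0 then show ?case by simp
next
  case (Suc j)
  then have "V j = 2 ^ j * V 0" "2 ^ j * V 0 < c" by auto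
  then show ?case using rec[of j] by simp
qed

lemma single_post:
  fixes V :: "nat \<Rightarrow> real"
  assumes c: "c > 0" and rec: "\<And>j. V (Suc j) = 2 * V j - (if c \<le> V j then 2 * V j else 0)"
    and s: "c \<le> V i"
  shows "V (Suc i + d) = 0"
proof (induction d)
  case 0 then show ?case using rec[of i] s by simp
next
  case (Suc d) then show ?case using rec[of "Suc i + d"] c by simp
qed

lemma single_char:
  fixes V :: "nat \<Rightarrow> real"
  assumes c: "c > 0" and rec: "\<And>j. V (Suc j) = 2 * V j - (if c \<le> V j then 2 * V j else 0)"
  shows "c \<le> V j \<longleftrightarrow> c \<le> 2 ^ j * V 0 \<and> (\<forall>i<j. 2 ^ i * V 0 < c)"
proof (cases "\<forall>i<j. 2 ^ i * V 0 < c")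
  case True
  then show ?thesis using single_pre[of V c, OF rec True] by simp
next
  case False
  then have "\<exists>i. i < j \<and> c \<le> 2 ^ i * V 0" by (auto simp: not_less)
  then have "\<exists>i. (i < j \<and> c \<le> 2 ^ i * V 0) \<and> (\<forall>i'<i. \<not> (i' < j \<and> c \<le> 2 ^ i' * V 0))"
    by (rule exists_least_iff[THEN iffD1])
  then obtain i where i: "i < j" "c \<le> 2 ^ i * V 0" and il: "\<forall>i'<i. \<not> (i' < j \<and> c \<le> 2 ^ i' * V 0)"
    by blast
  have "\<forall>i'<i. 2 ^ i' * V 0 < c" using il i(1) by (auto simp: not_le)
  then have "V i = 2 ^ i * V 0" by (rule single_pre[of V c, OF rec])
  then have "c \<le> V i" using i by simp
  then have "V (Suc i + (j - Suc i)) = 0" by (rule single_post[of c V, OF c rec])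
  then have "V j = 0" using i(1) by simp
  then show ?thesis using False c by simp
qed

lemma single_main:
  fixes V :: "nat \<Rightarrow> real"
  assumes ce: "c = 2 powi emax" and rec: "\<And>j. V (Suc j) = 2 * V j - (if c \<le> V j then 2 * V j else 0)"
  shows "la_single (emax - int m) emax (max (V 0) 0) = (\<Sum>j\<in>{j. j \<le> m \<and> c \<le> V j}. c / 2 ^ j)"
proof -
  have c: "c > 0" using ce by simp
  have e1: "(2::real) powi (emax - int m) = c / 2 ^ m" using ce pw_sub by simp
  have e2: "(2::real) powi (emax + 1) = 2 * c" using ce pw_1 by simp
  have ch: "\<And>j. c \<le> V j \<longleftrightarrow> c \<le> 2 ^ j * V 0 \<and> (\<forall>i<j. 2 ^ i * V 0 < c)"
    by (rule single_char[of c V, OF c rec])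
  let ?S = "{j. j \<le> m \<and> c \<le> V j}"
  show ?thesis
  proof (cases "V 0 < c / 2 ^ m")
    case True
    have Se: "?S = {}"
    proof (rule ccontr)
      assume "?S \<noteq> {}"
      then obtain j where j: "j \<le> m" "c \<le> V j" by auto
      then have "c \<le> 2 ^ j * V 0" using ch by blast
      moreover have "2 ^ j * V 0 < c"
      proof (cases "V 0 \<le> 0")
        case True
        have "(0::real) \<le> 2 ^ j" by simp
        then have "2 ^ j * V 0 \<le> 0" using True by (rule mult_nonneg_nonpos)
        then show ?thesis using c by linarith
      next
        case False
        have "2 ^ j * V 0 \<le> 2 ^ m * V 0" using j(1) False by (intro mult_right_mono) auto
        also have "\<dots> < c" using True by (simp add: field_simps)
        finally show ?thesis .
      qed
      ultimately show False by simp
    qed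
    moreover have "max (V 0) 0 < c / 2 ^ m" using True c by simp
    then have "la_single (emax - int m) emax (max (V 0) 0) = 0" unfolding la_single_def e1 by simp
    then show ?thesis unfolding Se by simp
  next
    case nsmall: False
    show ?thesis
    proof (cases "V 0 < 2 * c")
      case True
      have "c / 2 ^ m > 0" using c by simp
      then have pos: "V 0 > 0" using nsmall by linarith
      have mx: "max (V 0) 0 = V 0" using pos by simp
      define L where "L = \<lfloor>log 2 (V 0)\<rfloor>"
      have "\<lfloor>log 2 (V 0)\<rfloor> = L \<longleftrightarrow> 2 powr real_of_int L \<le> V 0 \<and> V 0 < 2 powr real_of_int (L + 1)"
        by (rule floor_log_eq_powr_iff[OF pos]) simp
      then have h: "2 powr real_of_int L \<le> V 0 \<and> V 0 < 2 powr real_of_int (L + 1)" using L_def by blast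
      have p1: "(2::real) powr real_of_int L = 2 powi L" by (rule powr_real_of_int') auto
      have p2: "(2::real) powr real_of_int (L + 1) = 2 powi (L + 1)" by (rule powr_real_of_int') auto
      have Lb1: "2 powi L \<le> V 0" and Lb2: "V 0 < 2 powi (L + 1)" using h unfolding p1 p2 by auto
      have "L \<le> emax"
      proof (rule ccontr)
        assume "\<not> L \<le> emax"
        then have "emax + 1 \<le> L" by simp
        then have "(2::real) powi (emax + 1) \<le> 2 powi L" by (rule power_int_increasing) simp
        then show False using Lb1 e2 True by linarith
      qed
      have "emax - int m \<le> L"
      proof (rule ccontr)
        assume "\<not> emax - int m \<le> L"
        then have "L + 1 \<le> emax - int m" by simp
        then have "(2::real) powi (L + 1) \<le> 2 powi (emax - int m)" by (rule power_int_increasing) simp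
        then show False using Lb2 e1 nsmall by linarith
      qed
      define j0 where "j0 = nat (emax - L)"
      have j0m: "j0 \<le> m" using \<open>emax - int m \<le> L\<close> unfolding j0_def by (simp add: nat_le_iff)
      have Lj: "L = emax - int j0" using \<open>L \<le> emax\<close> unfolding j0_def by simp
      have pw: "(2::real) powi L = c / 2 ^ j0" unfolding Lj ce by (rule pw_sub)
      have pw2: "(2::real) powi (L + 1) = 2 * c / 2 ^ j0" unfolding pw_1 pw by simp
      have "c / 2 ^ j0 \<le> V 0" using Lb1 pw by simp
      then have "c \<le> V 0 * 2 ^ j0" by (simp add: pos_divide_le_eq)
      then have lo: "c \<le> 2 ^ j0 * V 0" by (metis mult.commute)
      have "V 0 < 2 * c / 2 ^ j0" using Lb2 pw2 by simp
      then have a: "V 0 * 2 ^ j0 < 2 * c" by (simp add: pos_less_divide_eq)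
      have hi: "2 ^ i * V 0 < c" if "i < j0" for i
      proof -
        from that have "(2::real) ^ Suc i \<le> 2 ^ j0" by (intro power_increasing) auto
        then have b: "2 ^ Suc i * V 0 \<le> 2 ^ j0 * V 0" using pos by (intro mult_right_mono) auto
        have "2 ^ Suc i * V 0 < 2 * c" using a b by (metis mult.commute order_le_less_trans)
        then show "2 ^ i * V 0 < c" by simp
      qed
      have Sj: "?S = {j0}"
      proof (intro set_eqI iffI)
        fix j :: nat assume "j \<in> {j0}"
        then have jj: "j = j0" by simp
        have "c \<le> V j0" using ch[of j0] lo hi by blast
        then show "j \<in> ?S" using j0m jj by simp
      next
        fix j :: nat assume "j \<in> ?S"
        then have "c \<le> V j" by simp
        then have cj: "c \<le> 2 ^ j * V 0" and aj: "\<forall>i<j. 2 ^ i * V 0 < c" using ch[of j] by blast+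
        have "j = j0"
        proof (rule linorder_cases[of j j0])
          assume "j < j0" then have "2 ^ j * V 0 < c" by (rule hi)
          then show ?thesis using cj by linarith
        next
          assume "j0 < j" then have "2 ^ j0 * V 0 < c" using aj by blast
          then show ?thesis using lo by linarith
        qed
        then show "j \<in> {j0}" by simp
      qed
      have "la_single (emax - int m) emax (max (V 0) 0) = 2 powi L"
        unfolding la_single_def e1 e2 mx L_def[symmetric] using nsmall True by (simp only: if_True if_False)
      then show ?thesis unfolding Sj using pw by simp
    next
      case False
      have "?S = {0}"
      proof -
        have "c \<le> V 0" using False c by simp
        show ?thesis
        proof (intro set_eqI iffI)
          fix j :: nat assume "j \<in> ?S"
          then have "c \<le> V j" by simp
          then have "\<forall>i<j. 2 ^ i * V 0 < c" using ch by blast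
          have "j = 0"
          proof (rule ccontr)
            assume "j \<noteq> 0"
            then have "0 < j" by simp
            then have "2 ^ 0 * V 0 < c" by (rule \<open>\<forall>i<j. 2 ^ i * V 0 < c\<close>[rule_format])
            then show False using \<open>c \<le> V 0\<close> by simp
          qed
          then show "j \<in> {0}" by simp
        next
          fix j :: nat assume "j \<in> {0}"
          then show "j \<in> ?S" using \<open>c \<le> V 0\<close> by simp
        qed
      qed
      moreover have "0 < V 0" using False c by simp
      moreover from this have "la_single (emax - int m) emax (max (V 0) 0) = 2 powi emax"
        unfolding la_single_def e1 e2 using False nsmall by (simp add: max_def)
      ultimately show ?thesis using ce by simp
    qed
  qed
qed

lemma geo: "(\<Sum>e\<in>{a..<a + int n}. (2::real) powi e) = 2 powi (a + int n) - 2 powi a"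
proof (induction n)
  case 0 then show ?case by simp
next
  case (Suc n)
  have "{a..<a + int (Suc n)} = insert (a + int n) {a..<a + int n}" by auto
  moreover have "a + int (Suc n) = (a + int n) + 1" by simp
  ultimately show ?case using Suc by (simp only: pw_1) simp
qed

lemma sum_lt:
  assumes "E \<subseteq> {a..<a + int n}"
  shows "(\<Sum>e\<in>E. (2::real) powi e) < 2 powi (a + int n)"
proof -
  have "(\<Sum>e\<in>E. (2::real) powi e) \<le> (\<Sum>e\<in>{a..<a + int n}. (2::real) powi e)"
    by (rule sum_mono2) (use assms in auto)
  also have "\<dots> < 2 powi (a + int n)" unfolding geo by simp
  finally show ?thesis .
qed

lemma uniq:
  "\<forall>E E'. E \<subseteq> {a..<a + int n} \<longrightarrow> E' \<subseteq> {a..<a + int n} \<longrightarrow>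
     (\<Sum>e\<in>E. (2::real) powi e) = (\<Sum>e\<in>E'. (2::real) powi e) \<longrightarrow> E = E'"
proof (induction n)
  case 0 then show ?case by auto
next
  case (Suc n)
  show ?case
  proof (intro allI impI)
    fix E E' :: "int set"
    assume E: "E \<subseteq> {a..<a + int (Suc n)}" and E': "E' \<subseteq> {a..<a + int (Suc n)}"
      and eq: "(\<Sum>e\<in>E. (2::real) powi e) = (\<Sum>e\<in>E'. (2::real) powi e)"
    let ?t = "a + int n"
    have fE: "finite E" "finite E'" using finite_subset[OF E] finite_subset[OF E'] by auto
    have E1: "E - {?t} \<subseteq> {a..<a + int n}" "E' - {?t} \<subseteq> {a..<a + int n}" using E E' by auto
    have split: "\<And>F. finite F \<Longrightarrow> (\<Sum>e\<in>F. (2::real) powi e) =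
        (\<Sum>e\<in>F - {?t}. (2::real) powi e) + (if ?t \<in> F then 2 powi ?t else 0)"
      by (simp add: sum_diff1)
    have lt1: "(\<Sum>e\<in>E - {?t}. (2::real) powi e) < 2 powi ?t" by (rule sum_lt[OF E1(1)])
    have lt2: "(\<Sum>e\<in>E' - {?t}. (2::real) powi e) < 2 powi ?t" by (rule sum_lt[OF E1(2)])
    have nn1: "(\<Sum>e\<in>E - {?t}. (2::real) powi e) \<ge> 0" by (rule sum_nonneg) simp
    have nn2: "(\<Sum>e\<in>E' - {?t}. (2::real) powi e) \<ge> 0" by (rule sum_nonneg) simp
    have s1: "(\<Sum>e\<in>E. (2::real) powi e) = (\<Sum>e\<in>E - {?t}. (2::real) powi e) + (if ?t \<in> E then 2 powi ?t else 0)"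
      by (rule split[OF fE(1)])
    have s2: "(\<Sum>e\<in>E'. (2::real) powi e) = (\<Sum>e\<in>E' - {?t}. (2::real) powi e) + (if ?t \<in> E' then 2 powi ?t else 0)"
      by (rule split[OF fE(2)])
    have same: "?t \<in> E \<longleftrightarrow> ?t \<in> E'"
    proof (cases "?t \<in> E"; cases "?t \<in> E'")
      assume a1: "?t \<in> E" and a2: "?t \<notin> E'"
      have "False" using eq s1[unfolded if_P[OF a1]] s2[unfolded if_not_P[OF a2]] lt2 nn1 by linarith
      then show ?thesis ..
    next
      assume a1: "?t \<notin> E" and a2: "?t \<in> E'"
      have "False" using eq s1[unfolded if_not_P[OF a1]] s2[unfolded if_P[OF a2]] lt1 nn2 by linarith
      then show ?thesis ..
    qed simp_all
    then have "(\<Sum>e\<in>E - {?t}. (2::real) powi e) = (\<Sum>e\<in>E' - {?t}. (2::real) powi e)"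
    proof (cases "?t \<in> E")
      case True
      then have "?t \<in> E'" using same by simp
      then show ?thesis using eq s1[unfolded if_P[OF True]] s2[unfolded if_P[OF \<open>?t \<in> E'\<close>]] by linarith
    next
      case False
      then have "?t \<notin> E'" using same by simp
      then show ?thesis using eq s1[unfolded if_not_P[OF False]] s2[unfolded if_not_P[OF \<open>?t \<notin> E'\<close>]] by linarith
    qed
    then have "E - {?t} = E' - {?t}" by (rule Suc.IH[rule_format, OF E1(1) E1(2)])
    then show "E = E'"
    proof (intro set_eqI)
      fix x assume d: "E - {?t} = E' - {?t}"
      show "x \<in> E \<longleftrightarrow> x \<in> E'"
      proof (cases "x = ?t")
        case True then show ?thesis using same by simp
      next
        case False
        have "x \<in> E - {?t} \<longleftrightarrow> x \<in> E' - {?t}" using d by simp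
        then show ?thesis using False by simp
      qed
    qed
  qed
qed


lemma la_exps_eq:
  assumes S: "S \<subseteq> {..m}" and emin: "emin = emax - int m"
    and la: "la k emin emax a = (\<Sum>j\<in>S. (2::real) powi emax / 2 ^ j)"
  shows "la_exps k emin emax a = (\<lambda>j. emax - int j) ` S"
proof -
  let ?E0 = "(\<lambda>j. emax - int j) ` S"
  have inj: "inj_on (\<lambda>j. emax - int j) S" by (auto simp: inj_on_def)
  have sum0: "(\<Sum>e\<in>?E0. (2::real) powi e) = (\<Sum>j\<in>S. (2::real) powi emax / 2 ^ j)"
    by (simp add: sum.reindex[OF inj] pw_sub)
  have ivl: "{emin..emax} = {emin..<emin + int (Suc m)}" using emin by auto
  have sub: "?E0 \<subseteq> {emin..emax}" using S emin by auto
  show ?thesis unfolding la_exps_def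
  proof (rule the_equality)
    show "?E0 \<subseteq> {emin..emax} \<and> la k emin emax a = (\<Sum>e\<in>?E0. 2 powi e)"
      using sub sum0 la by simp
  next
    fix E assume h: "E \<subseteq> {emin..emax} \<and> la k emin emax a = (\<Sum>e\<in>E. (2::real) powi e)"
    have h1: "E \<subseteq> {emin..<emin + int (Suc m)}" using h ivl by simp
    have h2: "?E0 \<subseteq> {emin..<emin + int (Suc m)}" using sub ivl by simp
    have h3: "(\<Sum>e\<in>E. (2::real) powi e) = (\<Sum>e\<in>?E0. (2::real) powi e)" using h sum0 la by simp
    show "E = ?E0" by (rule uniq[of emin "Suc m", rule_format, OF h1 h2 h3])
  qed
qed

theorem lemma2:
  fixes k :: ef_kind
    and ein_min ein_max eout_min eout_max :: int
    and G :: "'a set" and w :: "'a \<Rightarrow> real" and Fin :: "'a \<Rightarrow> nat set"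
  assumes "ein_min \<le> ein_max" and "eout_min \<le> eout_max"
    and "finite G"
    and "\<forall>i\<in>G. finite (Fin i)"
    and "\<forall>i\<in>G. \<forall>tin\<in>Fin i. int tin \<le> (ein_max - ein_min + 1) - 1"
  shows "out_spikes k ein_min eout_max G w Fin
           \<inter> {(ein_max - ein_min + 1) - 1 .. (ein_max - ein_min + 1) + (eout_max - eout_min + 1) - 2}
         = (\<lambda>s. (ein_max - ein_min + 1) - 1 + s) `
             ltc k eout_min eout_max
               (max (Vm_pre k ein_min eout_max G w Fin ((ein_max - ein_min + 1) - 1)) 0)"
proof -
  define n where "n = nat (ein_max - ein_min)"
  define m where "m = nat (eout_max - eout_min)"
  define c :: real where "c = 2 powi eout_max"
  define V where "V = (\<lambda>j. vpre k c ein_min G w Fin (n + j))"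
  have nE: "ein_max - ein_min + 1 - 1 = int n" using assms(1) n_def by simp
  have mE: "eout_min = eout_max - int m" using assms(2) m_def by simp
  have top: "ein_max - ein_min + 1 + (eout_max - eout_min + 1) - 2 = int n + int m"
    using assms(1,2) n_def m_def by simp
  have c: "c > 0" using c_def by simp
  have rec0: "\<And>j. V (Suc j) = 2 * V j - (if c \<le> V j then 2 * reset_amp k c (V j) else 0)"
  proof -
    fix j
    have "\<forall>i\<in>G. \<forall>tin\<in>Fin i. int tin \<le> int (n + j)" using assms(5) nE by fastforce
    then have "vpre k c ein_min G w Fin (Suc (n + j)) = 2 * vpre k c ein_min G w Fin (n + j)
     - (if c \<le> vpre k c ein_min G w Fin (n + j) then 2 * reset_amp k c (vpre k c ein_min G w Fin (n + j)) else 0)"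
      by (rule vpre_succ[OF assms(4)])
    then show "V (Suc j) = 2 * V j - (if c \<le> V j then 2 * reset_amp k c (V j) else 0)"
      unfolding V_def by simp
  qed
  define S where "S = {j. j \<le> m \<and> c \<le> V j}"
  have V0: "Vm_pre k ein_min eout_max G w Fin (int n) = V 0"
    unfolding Vm_pre_def V_def c_def by simp
  have la: "la k eout_min eout_max (max (V 0) 0) = (\<Sum>j\<in>S. c / 2 ^ j)"
  proof (cases k)
    case MultiSpike
    have "\<And>j. V (Suc j) = 2 * V j - (if c \<le> V j then 2 * c else 0)"
      using rec0 MultiSpike by (simp add: reset_amp_def)
    then show ?thesis unfolding la_def MultiSpike mE S_def
      using multi_main[OF c_def] by simp
  next
    case SingleSpike
    have "\<And>j. V (Suc j) = 2 * V j - (if c \<le> V j then 2 * V j else 0)"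
      using rec0 SingleSpike by (simp add: reset_amp_def)
    then show ?thesis unfolding la_def SingleSpike mE S_def
      using single_main[OF c_def] by simp
  qed
  have exps: "la_exps k eout_min eout_max (max (V 0) 0) = (\<lambda>j. eout_max - int j) ` S"
    by (rule la_exps_eq[OF _ mE]) (use la c_def S_def in auto)
  have ltcS: "ltc k eout_min eout_max (max (V 0) 0) = int ` S"
    unfolding ltc_def exps image_image by simp
  have os: "\<And>t. t \<in> out_spikes k ein_min eout_max G w Fin \<longleftrightarrow> c \<le> Vm_pre k ein_min eout_max G w Fin t"
    unfolding out_spikes_def c_def by simp
  show ?thesis unfolding nE top V0 ltcS
  proof (rule set_eqI)
    fix t
    show "t \<in> out_spikes k ein_min eout_max G w Fin \<inter> {int n..int n + int m} \<longleftrightarrow>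
          t \<in> (\<lambda>s. int n + s) ` int ` S"
    proof
      assume h: "t \<in> out_spikes k ein_min eout_max G w Fin \<inter> {int n..int n + int m}"
      define j where "j = nat (t - int n)"
      have tj: "t = int n + int j" and jm: "j \<le> m" using h j_def by auto
      have "Vm_pre k ein_min eout_max G w Fin t = V j"
        unfolding Vm_pre_def V_def c_def tj by (simp add: nat_add_distrib)
      then have "j \<in> S" using h os jm S_def by auto
      then show "t \<in> (\<lambda>s. int n + s) ` int ` S" using tj by auto
    next
      assume "t \<in> (\<lambda>s. int n + s) ` int ` S"
      then obtain j where j: "j \<in> S" "t = int n + int j" by auto
      have "Vm_pre k ein_min eout_max G w Fin t = V j"
        unfolding Vm_pre_def V_def c_def j(2) by (simp add: nat_add_distrib)
      then show "t \<in> out_spikes k ein_min eout_max G w Fin \<inter> {int n..int n + int m}"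
        using j os S_def by auto
    qed
  qed
qed

end
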